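(* Let $Q$ be a quiver with no oriented cycles, $\theta\in\mathbb{Z}^{Q_0}$ a weight with $\nabla(Q,\theta)\ne\emptyset$, and $a\in Q_1$ an arrow such that the quiver $\hat Q$ obtained by contracting $a$ has no oriented cycles. Then for all sufficiently large integers $d$ the arrow $a$ is contractable for the pair $(Q,\theta+d(\varepsilon_{a^+}-\varepsilon_{a^-}))$, where $\varepsilon_v\in\mathbb{Z}^{Q_0}$ is the characteristic function of the vertex $v$.
   Context: A quiver $Q$: vertices $Q_0$, arrows $Q_1$, $a$ from $a^-$ to $a^+$. $\nabla(Q,\theta)=\{x\in\mathbb{R}_{\ge0}^{Q_1}\mid\forall v:\ \theta(v)=\sum_{a^+=v}x(a)-\sum_{a^-=v}x(a)\}$. Contracting a non-loop arrow $a$ of $(Q,\psi)$ gives $(\hat Q,\hat\psi)$: delete $a$, glue $a^-$ and $a^+$ to one vertex $v$, $\hat\psi(v)=\psi(a^-)+\psi(a^+)$, $\hat\psi=\psi$ elsewhere. The arrow $a$ is contractable for $(Q,\psi)$ if $\nabla(Q,\psi)$ and $\nabla(\hat Q,\hat\psi)$ are integral-affinely equivalent: there is an affine isomorphism between their affine spans mapping lattice points of one span (lattices $\mathbb{Z}^{Q_1}$, $\mathbb{Z}^{\hat Q_1}$) onto lattice points of the other and one polyhedron onto the other. *)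

theory Defs
  imports "HOL-Analysis.Analysis"
begin

text \<open>A quiver is given by a vertex set V, an arrow set E and source/target maps
  (a^- = src a, a^+ = tgt a). Real vectors indexed by the arrows are functions
  'e => real that vanish outside the arrow set.\<close>

definition quiver :: "'v set \<Rightarrow> 'e set \<Rightarrow> ('e \<Rightarrow> 'v) \<Rightarrow> ('e \<Rightarrow> 'v) \<Rightarrow> bool" where
  "quiver V E src tgt \<longleftrightarrow> finite V \<and> finite E \<and> (\<forall>a\<in>E. src a \<in> V \<and> tgt a \<in> V)"

definition acyclic_quiver :: "'e set \<Rightarrow> ('e \<Rightarrow> 'v) \<Rightarrow> ('e \<Rightarrow> 'v) \<Rightarrow> bool" where
  "acyclic_quiver E src tgt \<longleftrightarrow> (\<forall>v. (v, v) \<notin> {(src a, tgt a) | a. a \<in> E}\<^sup>+)"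

definition flow_polytope ::
  "'v set \<Rightarrow> 'e set \<Rightarrow> ('e \<Rightarrow> 'v) \<Rightarrow> ('e \<Rightarrow> 'v) \<Rightarrow> ('v \<Rightarrow> int) \<Rightarrow> ('e \<Rightarrow> real) set" where
  "flow_polytope V E src tgt \<theta> =
     {x. (\<forall>a\<in>E. 0 \<le> x a) \<and> (\<forall>a. a \<notin> E \<longrightarrow> x a = 0) \<and>
         (\<forall>v\<in>V. real_of_int (\<theta> v) =
                  (\<Sum>a\<in>{a\<in>E. tgt a = v}. x a) - (\<Sum>a\<in>{a\<in>E. src a = v}. x a))}"

text \<open>Contraction of a (non-loop) arrow a: delete a and glue tgt a onto src a.\<close>
definition glue :: "('e \<Rightarrow> 'v) \<Rightarrow> ('e \<Rightarrow> 'v) \<Rightarrow> 'e \<Rightarrow> 'v \<Rightarrow> 'v" where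
  "glue src tgt a w = (if w = tgt a then src a else w)"

definition contr_V :: "'v set \<Rightarrow> ('e \<Rightarrow> 'v) \<Rightarrow> ('e \<Rightarrow> 'v) \<Rightarrow> 'e \<Rightarrow> 'v set" where
  "contr_V V src tgt a = V - {tgt a}"

definition contr_E :: "'e set \<Rightarrow> 'e \<Rightarrow> 'e set" where
  "contr_E E a = E - {a}"

definition contr_src :: "('e \<Rightarrow> 'v) \<Rightarrow> ('e \<Rightarrow> 'v) \<Rightarrow> 'e \<Rightarrow> 'e \<Rightarrow> 'v" where
  "contr_src src tgt a = glue src tgt a \<circ> src"

definition contr_tgt :: "('e \<Rightarrow> 'v) \<Rightarrow> ('e \<Rightarrow> 'v) \<Rightarrow> 'e \<Rightarrow> 'e \<Rightarrow> 'v" where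
  "contr_tgt src tgt a = glue src tgt a \<circ> tgt"

definition contr_weight :: "('e \<Rightarrow> 'v) \<Rightarrow> ('e \<Rightarrow> 'v) \<Rightarrow> 'e \<Rightarrow> ('v \<Rightarrow> int) \<Rightarrow> 'v \<Rightarrow> int" where
  "contr_weight src tgt a \<psi> w = (if w = src a then \<psi> (src a) + \<psi> (tgt a) else \<psi> w)"

definition aff_span :: "('e \<Rightarrow> real) set \<Rightarrow> ('e \<Rightarrow> real) set" where
  "aff_span P = {y. \<exists>S u. finite S \<and> S \<noteq> {} \<and> S \<subseteq> P \<and> sum u S = 1 \<and>
                        y = (\<lambda>i. \<Sum>x\<in>S. u x * x i)}"

definition affine_on :: "('e \<Rightarrow> real) set \<Rightarrow> (('e \<Rightarrow> real) \<Rightarrow> ('f \<Rightarrow> real)) \<Rightarrow> bool" where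
  "affine_on A \<phi> \<longleftrightarrow> (\<forall>x\<in>A. \<forall>y\<in>A. \<forall>t::real.
      \<phi> (\<lambda>i. (1 - t) * x i + t * y i) = (\<lambda>j. (1 - t) * \<phi> x j + t * \<phi> y j))"

definition lattice_pts :: "('e \<Rightarrow> real) set \<Rightarrow> ('e \<Rightarrow> real) set" where
  "lattice_pts A = {x\<in>A. \<forall>i. x i \<in> \<int>}"

definition int_aff_equiv :: "('e \<Rightarrow> real) set \<Rightarrow> ('f \<Rightarrow> real) set \<Rightarrow> bool" where
  "int_aff_equiv P P' \<longleftrightarrow> (\<exists>\<phi>. bij_betw \<phi> (aff_span P) (aff_span P') \<and>
      affine_on (aff_span P) \<phi> \<and>
      \<phi> ` lattice_pts (aff_span P) = lattice_pts (aff_span P') \<and>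
      \<phi> ` P = P')"

definition contractable ::
  "'v set \<Rightarrow> 'e set \<Rightarrow> ('e \<Rightarrow> 'v) \<Rightarrow> ('e \<Rightarrow> 'v) \<Rightarrow> ('v \<Rightarrow> int) \<Rightarrow> 'e \<Rightarrow> bool" where
  "contractable V E src tgt \<psi> a \<longleftrightarrow>
     int_aff_equiv (flow_polytope V E src tgt \<psi>)
       (flow_polytope (contr_V V src tgt a) (contr_E E a) (contr_src src tgt a)
          (contr_tgt src tgt a) (contr_weight src tgt a \<psi>))"

definition char_vec :: "'v \<Rightarrow> 'v \<Rightarrow> int" where
  "char_vec v w = (if w = v then 1 else 0)"

end

theory Submission imports Defs
begin

lemma flow_bound:
  assumes q: "quiver V E src tgt" and ac: "acyclic_quiver E src tgt"
  shows "\<exists>C. \<forall>x\<in>flow_polytope V E src tgt \<theta>. (\<Sum>b\<in>E. x b) \<le> C"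
proof -
  define R where "R = {(src b, tgt b) | b. b \<in> E}"
  define pot where "pot v = real (card {w. (w,v) \<in> R\<^sup>+})" for v
  have fV: "finite V" and fE: "finite E" and endp: "\<And>b. b \<in> E \<Longrightarrow> src b \<in> V \<and> tgt b \<in> V"
    using q by (auto simp: quiver_def)
  have "R \<subseteq> V \<times> V" using endp by (auto simp: R_def)
  hence RV: "R\<^sup>+ \<subseteq> V \<times> V" by (rule trancl_subset_Sigma)
  have fin: "finite {w. (w,v) \<in> R\<^sup>+}" for v
    by (rule finite_subset[OF _ fV]) (use RV in auto)
  have step: "pot (tgt b) \<ge> pot (src b) + 1" if b: "b \<in> E" for b
  proof -
    have Rb: "(src b, tgt b) \<in> R" using b by (auto simp: R_def)
    have sub: "insert (src b) {w. (w, src b) \<in> R\<^sup>+} \<subseteq> {w. (w, tgt b) \<in> R\<^sup>+}"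
      using Rb by (auto intro: trancl_into_trancl)
    have nin: "src b \<notin> {w. (w, src b) \<in> R\<^sup>+}" using ac by (auto simp: acyclic_quiver_def R_def)
    have "card (insert (src b) {w. (w, src b) \<in> R\<^sup>+}) \<le> card {w. (w, tgt b) \<in> R\<^sup>+}"
      by (rule card_mono[OF fin sub])
    with nin fin[of "src b"] show ?thesis by (simp add: pot_def)
  qed
  define C where "C = (\<Sum>v\<in>V. pot v * real_of_int (\<theta> v))"
  show ?thesis
  proof (intro exI ballI)
    fix x assume x: "x \<in> flow_polytope V E src tgt \<theta>"
    hence nn: "\<And>b. b \<in> E \<Longrightarrow> 0 \<le> x b" and cons: "\<And>v. v \<in> V \<Longrightarrow> real_of_int (\<theta> v) =
                  (\<Sum>a\<in>{a\<in>E. tgt a = v}. x a) - (\<Sum>a\<in>{a\<in>E. src a = v}. x a)"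
      by (auto simp: flow_polytope_def)
    have g1: "(\<Sum>v\<in>V. (\<Sum>b\<in>{b\<in>E. tgt b = v}. pot v * x b)) = (\<Sum>b\<in>E. pot (tgt b) * x b)"
    proof -
      have "(\<Sum>v\<in>V. (\<Sum>b\<in>{b\<in>E. tgt b = v}. pot v * x b)) = (\<Sum>v\<in>V. (\<Sum>b\<in>{b\<in>E. tgt b = v}. pot (tgt b) * x b))"
        by (rule sum.cong) auto
      also have "\<dots> = (\<Sum>b\<in>E. pot (tgt b) * x b)"
        by (rule sum.group[OF fE fV]) (use endp in auto)
      finally show ?thesis .
    qed
    have g2: "(\<Sum>v\<in>V. (\<Sum>b\<in>{b\<in>E. src b = v}. pot v * x b)) = (\<Sum>b\<in>E. pot (src b) * x b)"
    proof -
      have "(\<Sum>v\<in>V. (\<Sum>b\<in>{b\<in>E. src b = v}. pot v * x b)) = (\<Sum>v\<in>V. (\<Sum>b\<in>{b\<in>E. src b = v}. pot (src b) * x b))"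
        by (rule sum.cong) auto
      also have "\<dots> = (\<Sum>b\<in>E. pot (src b) * x b)"
        by (rule sum.group[OF fE fV]) (use endp in auto)
      finally show ?thesis .
    qed
    have "C = (\<Sum>v\<in>V. pot v * ((\<Sum>a\<in>{a\<in>E. tgt a = v}. x a) - (\<Sum>a\<in>{a\<in>E. src a = v}. x a)))"
      unfolding C_def by (rule sum.cong) (auto simp: cons)
    also have "\<dots> = (\<Sum>v\<in>V. (\<Sum>b\<in>{b\<in>E. tgt b = v}. pot v * x b)) - (\<Sum>v\<in>V. (\<Sum>b\<in>{b\<in>E. src b = v}. pot v * x b))"
      by (simp add: right_diff_distrib sum_distrib_left sum_subtractf)
    also have "\<dots> = (\<Sum>b\<in>E. (pot (tgt b) - pot (src b)) * x b)"
      unfolding g1 g2 by (simp add: left_diff_distrib sum_subtractf)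
    finally have Ceq: "C = (\<Sum>b\<in>E. (pot (tgt b) - pot (src b)) * x b)" .
    have "(\<Sum>b\<in>E. x b) \<le> (\<Sum>b\<in>E. (pot (tgt b) - pot (src b)) * x b)"
    proof (rule sum_mono)
      fix b assume b: "b \<in> E"
      have "1 * x b \<le> (pot (tgt b) - pot (src b)) * x b"
        by (rule mult_right_mono) (use step[OF b] nn[OF b] in auto)
      thus "x b \<le> (pot (tgt b) - pot (src b)) * x b" by simp
    qed
    thus "(\<Sum>b\<in>E. x b) \<le> C" using Ceq by simp
  qed
qed


definition acp :: "(('e\<Rightarrow>real) \<Rightarrow> ('e\<Rightarrow>real)) \<Rightarrow> bool" where
  "acp g \<longleftrightarrow> (\<forall>(S::(('e\<Rightarrow>real) set)) u p. finite S \<longrightarrow> sum u S = 1 \<longrightarrow>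
      g (\<lambda>i. \<Sum>x\<in>S. u x * p x i) = (\<lambda>j. \<Sum>x\<in>S. u x * g (p x) j))"

lemma acp_comp: fixes f g :: "('e\<Rightarrow>real) \<Rightarrow> ('e\<Rightarrow>real)" assumes f: "acp f" and g: "acp g" shows "acp (g \<circ> f)"
  unfolding acp_def
proof (intro allI impI)
  fix S :: "('e\<Rightarrow>real) set" and u :: "('e\<Rightarrow>real) \<Rightarrow> real" and p :: "('e\<Rightarrow>real) \<Rightarrow> ('e\<Rightarrow>real)" assume S: "finite S" "sum u S = 1"
  have "f (\<lambda>i. \<Sum>x\<in>S. u x * p x i) = (\<lambda>j. \<Sum>x\<in>S. u x * f (p x) j)"
    using f S unfolding acp_def by blast
  moreover have "g (\<lambda>j. \<Sum>x\<in>S. u x * (f \<circ> p) x j) = (\<lambda>j. \<Sum>x\<in>S. u x * g ((f \<circ> p) x) j)"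
    using g S unfolding acp_def by blast
  ultimately show "(g \<circ> f) (\<lambda>i. \<Sum>x\<in>S. u x * p x i) = (\<lambda>j. \<Sum>x\<in>S. u x * (g \<circ> f) (p x) j)"
    by simp
qed

lemma acpD: "acp g \<Longrightarrow> finite S \<Longrightarrow> sum u S = 1 \<Longrightarrow>
      g (\<lambda>i. \<Sum>x\<in>S. u x * x i) = (\<lambda>j. \<Sum>x\<in>S. u x * g x j)"
  unfolding acp_def by (erule allE[of _ S], erule allE[of _ u], erule allE[of _ "\<lambda>x. x"]) simp

lemma acp_image:
  assumes g: "acp g" and inj: "inj_on g P"
  shows "g ` aff_span P \<subseteq> aff_span (g ` P)"
proof
  fix z assume "z \<in> g ` aff_span P"
  then obtain S u where S: "finite S" "S \<noteq> {}" "S \<subseteq> P" "sum u S = 1"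
    and z: "z = g (\<lambda>i. \<Sum>x\<in>S. u x * x i)"
    by (auto simp: aff_span_def)
  have z2: "z = (\<lambda>j. \<Sum>x\<in>S. u x * g x j)" using acpD[OF g S(1) S(4)] z by simp
  have injS: "inj_on g S" using inj S(3) by (rule inj_on_subset)
  define u' where "u' = u \<circ> the_inv_into S g"
  have "sum u' (g ` S) = sum (u' \<circ> g) S" by (rule sum.reindex[OF injS])
  also have "\<dots> = sum u S" by (rule sum.cong) (auto simp: u'_def the_inv_into_f_f[OF injS])
  finally have su: "sum u' (g ` S) = 1" using S by simp
  have "(\<lambda>j. \<Sum>y\<in>g ` S. u' y * y j) = (\<lambda>j. \<Sum>x\<in>S. u x * g x j)"
  proof
    fix j
    have "(\<Sum>y\<in>g ` S. u' y * y j) = (\<Sum>x\<in>S. u' (g x) * g x j)"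
      by (rule sum.reindex_cong[OF injS refl]) simp
    also have "\<dots> = (\<Sum>x\<in>S. u x * g x j)" by (rule sum.cong) (auto simp: u'_def the_inv_into_f_f[OF injS])
    finally show "(\<Sum>y\<in>g ` S. u' y * y j) = (\<Sum>x\<in>S. u x * g x j)" .
  qed
  thus "z \<in> aff_span (g ` P)" unfolding aff_span_def using S su z2
    by (intro CollectI exI[of _ "g ` S"] exI[of _ u']) auto
qed

lemma acp_id:
  assumes g: "acp g" and id: "\<And>z. z \<in> P \<Longrightarrow> g z = z" and x: "x \<in> aff_span P"
  shows "g x = x"
proof -
  obtain S u where S: "finite S" "S \<noteq> {}" "S \<subseteq> P" "sum u S = 1"
    and xe: "x = (\<lambda>i. \<Sum>y\<in>S. u y * y i)" using x by (auto simp: aff_span_def)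
  have "g x = (\<lambda>j. \<Sum>y\<in>S. u y * g y j)" using acpD[OF g S(1) S(4)] xe by simp
  also have "\<dots> = x" unfolding xe using id S(3) by (intro ext sum.cong) auto
  finally show ?thesis .
qed

lemma sum_upd:
  fixes f :: "'e \<Rightarrow> real"
  assumes "finite B"
  shows "sum (f(a:=c)) B = sum f B - (if a\<in>B then f a else 0) + (if a\<in>B then c else 0)"
proof (cases "a \<in> B")
  case True
  have "sum (f(a:=c)) B = c + sum (f(a:=c)) (B - {a})" using sum.remove[OF assms True, of "f(a:=c)"] by simp
  also have "sum (f(a:=c)) (B - {a}) = sum f (B - {a})" by (rule sum.cong) auto
  also have "sum f (B - {a}) = sum f B - f a" using sum.remove[OF assms True, of f] by simp
  finally show ?thesis using True by simp
next
  case False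
  thus ?thesis by (auto intro: sum.cong)
qed

lemma sum_del:
  fixes f :: "'e \<Rightarrow> real"
  assumes "finite E" "f a = 0"
  shows "sum f {b\<in>E-{a}. Q b} = sum f {b\<in>E. Q b}"
proof -
  have "{b\<in>E-{a}. Q b} = {b\<in>E. Q b} - {a}" by auto
  thus ?thesis using assms by (simp add: sum_diff1)
qed

lemma glue_sum:
  fixes f :: "'e \<Rightarrow> real"
  assumes fE: "finite E" and st: "src a \<noteq> tgt a" and v: "v \<noteq> tgt a" and f0: "f a = 0"
  shows "sum f {b\<in>E-{a}. glue src tgt a (T b) = v} =
    (if v = src a then sum f {b\<in>E. T b = src a} + sum f {b\<in>E. T b = tgt a} else sum f {b\<in>E. T b = v})"
proof -
  have "sum f {b\<in>E-{a}. glue src tgt a (T b) = v} = sum f {b\<in>E. glue src tgt a (T b) = v}"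
    by (rule sum_del[of E f a, OF fE f0])
  also have "\<dots> = (if v = src a then sum f {b\<in>E. T b = src a} + sum f {b\<in>E. T b = tgt a} else sum f {b\<in>E. T b = v})"
  proof (cases "v = src a")
    case True
    have "{b\<in>E. glue src tgt a (T b) = v} = {b\<in>E. T b = src a} \<union> {b\<in>E. T b = tgt a}"
      using True v by (auto simp: glue_def)
    moreover have "sum f ({b\<in>E. T b = src a} \<union> {b\<in>E. T b = tgt a}) = sum f {b\<in>E. T b = src a} + sum f {b\<in>E. T b = tgt a}"
      by (rule sum.union_disjoint) (use fE st in auto)
    ultimately show ?thesis using True by simp
  next
    case False
    have "{b\<in>E. glue src tgt a (T b) = v} = {b\<in>E. T b = v}"
      using False v by (auto simp: glue_def)
    thus ?thesis using False by simp
  qed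
  finally show ?thesis .
qed

lemma flow_cong:
  "(\<And>v. v \<in> V \<Longrightarrow> \<theta>1 v = \<theta>2 v) \<Longrightarrow> flow_polytope V E src tgt \<theta>1 = flow_polytope V E src tgt \<theta>2"
  unfolding flow_polytope_def by auto


theorem proposition4p21:
  fixes V :: "'v set" and E :: "'e set" and src tgt :: "'e \<Rightarrow> 'v"
    and \<theta> :: "'v \<Rightarrow> int" and a :: 'e
  assumes "quiver V E src tgt"
    and "acyclic_quiver E src tgt"
    and "flow_polytope V E src tgt \<theta> \<noteq> {}"
    and "a \<in> E"
    and "acyclic_quiver (contr_E E a) (contr_src src tgt a) (contr_tgt src tgt a)"
  shows "\<exists>D::int. \<forall>d\<ge>D. contractable V E src tgt
           (\<lambda>v. \<theta> v + d * (char_vec (tgt a) v - char_vec (src a) v)) a"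
proof -
  note q = assms(1) and ac = assms(2) and aE = assms(4) and acc = assms(5)
  have fV: "finite V" and fE: "finite E" and endp: "\<And>b. b \<in> E \<Longrightarrow> src b \<in> V \<and> tgt b \<in> V"
    using q by (auto simp: quiver_def)
  have st: "src a \<noteq> tgt a"
  proof
    assume eq: "src a = tgt a"
    have "(src a, tgt a) \<in> {(src b, tgt b) | b. b \<in> E}" using aE by auto
    hence "(src a, src a) \<in> {(src b, tgt b) | b. b \<in> E}\<^sup>+" using eq by auto
    thus False using ac by (auto simp: acyclic_quiver_def)
  qed
  define \<theta>0 where "\<theta>0 = contr_weight src tgt a \<theta>"
  have qc: "quiver (contr_V V src tgt a) (contr_E E a) (contr_src src tgt a) (contr_tgt src tgt a)"
    using fV fE endp st aE by (auto simp: quiver_def contr_V_def contr_E_def contr_src_def contr_tgt_def glue_def)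
  obtain C where C: "\<And>y. y \<in> flow_polytope (contr_V V src tgt a) (contr_E E a) (contr_src src tgt a) (contr_tgt src tgt a) \<theta>0
      \<Longrightarrow> (\<Sum>b\<in>contr_E E a. y b) \<le> C"
    using flow_bound[OF qc acc, of \<theta>0] by blast
  show ?thesis
  proof (intro exI[of _ "\<lceil>C\<rceil> - \<theta> (tgt a)"] allI impI)
    fix d :: int assume d: "d \<ge> \<lceil>C\<rceil> - \<theta> (tgt a)"
    define \<psi> where "\<psi> = (\<lambda>v. \<theta> v + d * (char_vec (tgt a) v - char_vec (src a) v))"
    have \<psi>t: "\<psi> (tgt a) = \<theta> (tgt a) + d" and \<psi>s: "\<psi> (src a) = \<theta> (src a) - d"
      and \<psi>o: "\<And>v. v \<noteq> src a \<Longrightarrow> v \<noteq> tgt a \<Longrightarrow> \<psi> v = \<theta> v"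
      using st by (auto simp: \<psi>_def char_vec_def)
    have Cle: "C \<le> real_of_int (\<psi> (tgt a))" using d \<psi>t by linarith
    define P where "P = flow_polytope V E src tgt \<psi>"
    define P' where "P' = flow_polytope (contr_V V src tgt a) (contr_E E a) (contr_src src tgt a)
          (contr_tgt src tgt a) (contr_weight src tgt a \<psi>)"
    have P'eq: "P' = flow_polytope (contr_V V src tgt a) (contr_E E a) (contr_src src tgt a) (contr_tgt src tgt a) \<theta>0"
      unfolding P'_def \<theta>0_def
      by (rule flow_cong) (auto simp: contr_V_def contr_weight_def \<psi>s \<psi>t \<psi>o)
    have Pm: "x \<in> P \<longleftrightarrow> (\<forall>b\<in>E. 0 \<le> x b) \<and> (\<forall>b. b \<notin> E \<longrightarrow> x b = 0) \<and>
         (\<forall>v\<in>V. real_of_int (\<psi> v) = (\<Sum>b\<in>{b\<in>E. tgt b = v}. x b) - (\<Sum>b\<in>{b\<in>E. src b = v}. x b))" for x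
      by (simp add: P_def flow_polytope_def)
    have P'm: "y \<in> P' \<longleftrightarrow> (\<forall>b\<in>E-{a}. 0 \<le> y b) \<and> (\<forall>b. b \<notin> E-{a} \<longrightarrow> y b = 0) \<and>
         (\<forall>v\<in>V-{tgt a}. real_of_int (contr_weight src tgt a \<psi> v) =
            (\<Sum>b\<in>{b\<in>E-{a}. glue src tgt a (tgt b) = v}. y b) - (\<Sum>b\<in>{b\<in>E-{a}. glue src tgt a (src b) = v}. y b))" for y
      by (simp add: P'_def flow_polytope_def contr_V_def contr_E_def contr_src_def contr_tgt_def)
    define h where "h y = real_of_int (\<psi> (tgt a)) - (\<Sum>b\<in>{b\<in>E-{a}. tgt b = tgt a}. y b)
        + (\<Sum>b\<in>{b\<in>E-{a}. src b = tgt a}. y b)" for y :: "'e \<Rightarrow> real"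
    define \<phi> where "\<phi> x = x(a := 0)" for x :: "'e \<Rightarrow> real"
    define \<iota> where "\<iota> y = y(a := h y)" for y :: "'e \<Rightarrow> real"
    have fin: "finite {b\<in>E. Q b}" "finite {b\<in>E-{a}. Q b}" for Q using fE by auto
    have \<phi>P: "\<phi> x \<in> P'" if x: "x \<in> P" for x
    proof -
      have nn: "\<forall>b\<in>E. 0 \<le> x b" and z: "\<forall>b. b \<notin> E \<longrightarrow> x b = 0" and cons: "\<And>v. v \<in> V \<Longrightarrow> real_of_int (\<psi> v) = (\<Sum>b\<in>{b\<in>E. tgt b = v}. x b) - (\<Sum>b\<in>{b\<in>E. src b = v}. x b)"
        using x unfolding Pm by auto
      have "real_of_int (contr_weight src tgt a \<psi> v) =
            (\<Sum>b\<in>{b\<in>E-{a}. glue src tgt a (tgt b) = v}. \<phi> x b) - (\<Sum>b\<in>{b\<in>E-{a}. glue src tgt a (src b) = v}. \<phi> x b)"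
        if v: "v \<in> V - {tgt a}" for v
      proof -
        have f0: "\<phi> x a = 0" by (simp add: \<phi>_def)
        note g1 = glue_sum[where E=E and src=src and tgt=tgt and a=a and f="\<phi> x" and v=v and T=tgt, OF fE st _ f0] and g2 = glue_sum[where E=E and src=src and tgt=tgt and a=a and f="\<phi> x" and v=v and T=src, OF fE st _ f0]
        have su: "sum (\<phi> x) {b\<in>E. Q b} = sum x {b\<in>E. Q b} - (if Q a then x a else 0)" for Q
          unfolding \<phi>_def using sum_upd[OF fin(1)[of Q], of x a 0] aE by simp
        show ?thesis
        proof (cases "v = src a")
          case True
          show ?thesis using v True g1 g2 su cons[of "src a"] cons[of "tgt a"] endp[OF aE] st
            by (simp add: contr_weight_def)
        next
          case False
          have vt: "tgt a \<noteq> v" using v by auto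
          show ?thesis using v vt False g1 g2 su cons[of v] st \<psi>o[of v]
            by (simp add: contr_weight_def)
        qed
      qed
      thus ?thesis unfolding P'm using nn z by (auto simp: \<phi>_def)
    qed
    have \<iota>P: "\<iota> y \<in> P" if y: "y \<in> P'" for y
    proof -
      have nn: "\<forall>b\<in>E-{a}. 0 \<le> y b" and z: "\<forall>b. b \<notin> E-{a} \<longrightarrow> y b = 0"
        and cons: "\<And>v. v \<in> V-{tgt a} \<Longrightarrow> real_of_int (contr_weight src tgt a \<psi> v) =
            (\<Sum>b\<in>{b\<in>E-{a}. glue src tgt a (tgt b) = v}. y b) - (\<Sum>b\<in>{b\<in>E-{a}. glue src tgt a (src b) = v}. y b)"
        using y unfolding P'm by auto
      have ya: "y a = 0" using z by auto
      have sd: "sum y {b\<in>E-{a}. Q b} = sum y {b\<in>E. Q b}" for Q by (rule sum_del[where E=E and f=y and a=a, OF fE ya])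
      have hnn: "0 \<le> h y"
      proof -
        have "(\<Sum>b\<in>{b\<in>E-{a}. tgt b = tgt a}. y b) \<le> (\<Sum>b\<in>E-{a}. y b)"
          by (rule sum_mono2) (use fE nn in auto)
        also have "\<dots> \<le> C" using C[of y] y P'eq by (simp add: contr_E_def)
        finally have "(\<Sum>b\<in>{b\<in>E-{a}. tgt b = tgt a}. y b) \<le> real_of_int (\<psi> (tgt a))" using Cle by linarith
        moreover have "0 \<le> (\<Sum>b\<in>{b\<in>E-{a}. src b = tgt a}. y b)" by (rule sum_nonneg) (use nn in auto)
        ultimately show ?thesis unfolding h_def by linarith
      qed
      have su: "sum (\<iota> y) {b\<in>E. Q b} = sum y {b\<in>E. Q b} + (if Q a then h y else 0)" for Q
        unfolding \<iota>_def using sum_upd[OF fin(1)[of Q], of y a "h y"] aE ya by simp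
      have "real_of_int (\<psi> v) = (\<Sum>b\<in>{b\<in>E. tgt b = v}. \<iota> y b) - (\<Sum>b\<in>{b\<in>E. src b = v}. \<iota> y b)"
        if v: "v \<in> V" for v
      proof -
        note g1 = glue_sum[where E=E and src=src and tgt=tgt and a=a and f=y and T=tgt, OF fE st _ ya] and g2 = glue_sum[where E=E and src=src and tgt=tgt and a=a and f=y and T=src, OF fE st _ ya]
        consider "v = tgt a" | "v = src a" | "v \<noteq> tgt a" "v \<noteq> src a" by blast
        thus ?thesis
        proof cases
          case 1
          show ?thesis using 1 su st unfolding h_def sd by simp
        next
          case 2
          have c: "real_of_int (contr_weight src tgt a \<psi> (src a)) =
            (\<Sum>b\<in>{b\<in>E-{a}. glue src tgt a (tgt b) = src a}. y b) - (\<Sum>b\<in>{b\<in>E-{a}. glue src tgt a (src b) = src a}. y b)"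
            using cons[of "src a"] endp[OF aE] st by simp
          show ?thesis using 2 su st c g1[of "src a"] g2[of "src a"] unfolding h_def sd
            by (simp add: contr_weight_def)
        next
          case 3
          show ?thesis using 3 su st cons[of v] v g1[of v] g2[of v] \<psi>o[of v]
            by (simp add: contr_weight_def)
        qed
      qed
      thus ?thesis unfolding Pm using nn z hnn aE by (auto simp: \<iota>_def)
    qed
    have \<phi>\<iota>: "\<phi> (\<iota> y) = y" if "y \<in> P'" for y
      using that unfolding P'm by (auto simp: \<phi>_def \<iota>_def)
    have \<iota>\<phi>: "\<iota> (\<phi> x) = x" if x: "x \<in> P" for x
    proof -
      have cons: "real_of_int (\<psi> (tgt a)) = (\<Sum>b\<in>{b\<in>E. tgt b = tgt a}. x b) - (\<Sum>b\<in>{b\<in>E. src b = tgt a}. x b)"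
        using x endp[OF aE] unfolding Pm by auto
      have s1: "sum (\<phi> x) {b\<in>E-{a}. Q b} = sum x {b\<in>E-{a}. Q b}" for Q
        by (rule sum.cong) (auto simp: \<phi>_def)
      have "sum x {b\<in>E. tgt b = tgt a} = x a + sum x {b\<in>E-{a}. tgt b = tgt a}"
      proof -
        have "{b\<in>E. tgt b = tgt a} = insert a {b\<in>E-{a}. tgt b = tgt a}" using aE by auto
        thus ?thesis using fin(2) by simp
      qed
      moreover have "{b\<in>E. src b = tgt a} = {b\<in>E-{a}. src b = tgt a}" using st by auto
      ultimately have "h (\<phi> x) = x a" using cons unfolding h_def s1 by simp
      thus ?thesis by (auto simp: \<iota>_def \<phi>_def)
    qed
    have imgP: "\<phi> ` P = P'"
    proof
      show "\<phi> ` P \<subseteq> P'" using \<phi>P by auto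
      show "P' \<subseteq> \<phi> ` P"
      proof
        fix y assume "y \<in> P'" thus "y \<in> \<phi> ` P" using \<phi>\<iota> \<iota>P by (metis image_eqI)
      qed
    qed
    have imgP': "\<iota> ` P' = P"
    proof
      show "\<iota> ` P' \<subseteq> P" using \<iota>P by auto
      show "P \<subseteq> \<iota> ` P'"
      proof
        fix x assume "x \<in> P" thus "x \<in> \<iota> ` P'" using \<iota>\<phi> \<phi>P by (metis image_eqI)
      qed
    qed
    have acp\<phi>: "acp \<phi>"
      unfolding acp_def \<phi>_def by (auto simp: fun_eq_iff)
    have hlin: "h (\<lambda>i. \<Sum>x\<in>S. u x * p x i) = (\<Sum>x\<in>S. u x * h (p x))"
      if S: "finite S" "sum u S = 1" for S :: "('e \<Rightarrow> real) set" and u :: "('e \<Rightarrow> real) \<Rightarrow> real" and p :: "('e \<Rightarrow> real) \<Rightarrow> ('e \<Rightarrow> real)"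
    proof -
      have sw: "(\<Sum>b\<in>B. \<Sum>x\<in>S. u x * p x b) = (\<Sum>x\<in>S. u x * (\<Sum>b\<in>B. p x b))" for B
        by (subst sum.swap) (simp add: sum_distrib_left)
      have c: "real_of_int (\<psi> (tgt a)) = (\<Sum>x\<in>S. u x * real_of_int (\<psi> (tgt a)))"
        using S by (simp add: sum_distrib_right[symmetric])
      show ?thesis unfolding h_def sw
        by (subst c) (simp add: algebra_simps sum.distrib sum_subtractf)
    qed
    have acp\<iota>: "acp \<iota>"
      unfolding acp_def
    proof (intro allI impI)
      fix S :: "('e \<Rightarrow> real) set" and u :: "('e \<Rightarrow> real) \<Rightarrow> real" and p :: "('e \<Rightarrow> real) \<Rightarrow> ('e \<Rightarrow> real)" assume S: "finite S" "sum u S = 1"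
      show "\<iota> (\<lambda>i. \<Sum>x\<in>S. u x * p x i) = (\<lambda>j. \<Sum>x\<in>S. u x * \<iota> (p x) j)"
        using hlin[OF S, of p] by (auto simp: \<iota>_def fun_eq_iff)
    qed
    have injP: "inj_on \<phi> P" by (rule inj_on_inverseI[of _ \<iota>]) (use \<iota>\<phi> in auto)
    have injP': "inj_on \<iota> P'" by (rule inj_on_inverseI[of _ \<phi>]) (use \<phi>\<iota> in auto)
    have A1: "\<phi> ` aff_span P \<subseteq> aff_span P'" using acp_image[OF acp\<phi> injP] imgP by simp
    have A2: "\<iota> ` aff_span P' \<subseteq> aff_span P" using acp_image[OF acp\<iota> injP'] imgP' by simp
    have I1: "\<iota> (\<phi> x) = x" if "x \<in> aff_span P" for x
      using acp_id[OF acp_comp[OF acp\<phi> acp\<iota>] _ that] \<iota>\<phi> by simp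
    have I2: "\<phi> (\<iota> y) = y" if "y \<in> aff_span P'" for y
      using acp_id[OF acp_comp[OF acp\<iota> acp\<phi>] _ that] \<phi>\<iota> by simp
    have bij: "bij_betw \<phi> (aff_span P) (aff_span P')"
      by (rule bij_betw_byWitness[of _ \<iota>]) (use I1 I2 A1 A2 in auto)
    have aff: "affine_on (aff_span P) \<phi>"
      unfolding affine_on_def \<phi>_def by (auto simp: fun_eq_iff)
    have lat: "\<phi> ` lattice_pts (aff_span P) = lattice_pts (aff_span P')"
    proof
      show "\<phi> ` lattice_pts (aff_span P) \<subseteq> lattice_pts (aff_span P')"
        using A1 by (auto simp: lattice_pts_def \<phi>_def)
      show "lattice_pts (aff_span P') \<subseteq> \<phi> ` lattice_pts (aff_span P)"
      proof
        fix y assume y: "y \<in> lattice_pts (aff_span P')"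
        hence ya: "y \<in> aff_span P'" and yi: "\<And>i. y i \<in> \<int>" by (auto simp: lattice_pts_def)
        have "h y \<in> \<int>" unfolding h_def using yi by (intro Ints_add Ints_diff Ints_sum) auto
        hence "\<iota> y \<in> lattice_pts (aff_span P)" using A2 ya yi by (auto simp: lattice_pts_def \<iota>_def)
        thus "y \<in> \<phi> ` lattice_pts (aff_span P)" using I2[OF ya] by (metis image_eqI)
      qed
    qed
    have "contractable V E src tgt \<psi> a"
      unfolding contractable_def int_aff_equiv_def P_def[symmetric] P'_def[symmetric]
      using bij aff lat imgP by blast
    thus "contractable V E src tgt (\<lambda>v. \<theta> v + d * (char_vec (tgt a) v - char_vec (src a) v)) a"
      by (simp add: \<psi>_def)
  qed
qed

end
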